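(* Let $b,n,c$ be positive integers with $4\leqslant 4b\leqslant n$. For every abelian group $\Gamma$ of order $4nbc$ there exists a diagonal $\mathrm{MRS}_\Gamma(n;4b;c)$.
   Context: For positive integers $m,n,s,k,c$ and an abelian group $\Gamma$ of order $nkc$, an $\mathrm{MRS}_\Gamma(m,n;s,k;c)$ is a set of $c$ partially filled $m\times n$ arrays (some cells may be empty) with entries in $\Gamma$ such that: every element of $\Gamma$ appears exactly once and in a unique array; in every array each row contains exactly $s$ filled cells and each column contains exactly $k$ filled cells; and there exist $\omega,\delta\in\Gamma$ such that in every array each row sum is $\omega$ and each column sum is $\delta$. $\mathrm{MRS}_\Gamma(n;k;c)$ denotes $\mathrm{MRS}_\Gamma(n,n;k,k;c)$. In an $n\times n$ array, for $0\leqslant \ell\leqslant n-1$ the diagonal $D_\ell$ is the set of cells $(i,j)$ with $j-i\equiv \ell\pmod n$. An $\mathrm{MRS}_\Gamma(n;k;c)$ is diagonal if, in each of its arrays, the filled cells are exactly the cells of $k$ consecutive diagonals $D_{t},\ldots,D_{t+k-1}$ (indices modulo $n$). *)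

theory Defs
  imports Main
begin

text \<open>A collection of c partially filled m x n arrays with entries in the abelian
  group 'a is modelled as A :: nat => nat => nat => 'a option, where A t i j is the
  content of cell (i,j) (row i < m, column j < n) of the array t < c; None = empty.\<close>

definition filled_row :: "(nat \<Rightarrow> nat \<Rightarrow> nat \<Rightarrow> 'a option) \<Rightarrow> nat \<Rightarrow> nat \<Rightarrow> nat \<Rightarrow> nat set" where
  "filled_row A n t i = {j. j < n \<and> A t i j \<noteq> None}"

definition filled_col :: "(nat \<Rightarrow> nat \<Rightarrow> nat \<Rightarrow> 'a option) \<Rightarrow> nat \<Rightarrow> nat \<Rightarrow> nat \<Rightarrow> nat set" where
  "filled_col A m t j = {i. i < m \<and> A t i j \<noteq> None}"

definition is_MRS :: "nat \<Rightarrow> nat \<Rightarrow> nat \<Rightarrow> nat \<Rightarrow> nat \<Rightarrow> (nat \<Rightarrow> nat \<Rightarrow> nat \<Rightarrow> 'a::{ab_group_add,finite} option) \<Rightarrow> bool" where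
  "is_MRS m n s k c A \<longleftrightarrow>
     0 < m \<and> 0 < n \<and> 0 < s \<and> 0 < k \<and> 0 < c \<and>
     card (UNIV :: 'a set) = n * k * c \<and>
     \<comment> \<open>every group element appears exactly once, in exactly one array\<close>
     (\<forall>g::'a. \<exists>!(t, i, j). t < c \<and> i < m \<and> j < n \<and> A t i j = Some g) \<and>
     \<comment> \<open>row / column fillings\<close>
     (\<forall>t<c. \<forall>i<m. card (filled_row A n t i) = s) \<and>
     (\<forall>t<c. \<forall>j<n. card (filled_col A m t j) = k) \<and>
     \<comment> \<open>constant row and column sums\<close>
     (\<exists>\<omega> \<delta>. (\<forall>t<c. \<forall>i<m. (\<Sum>j\<in>filled_row A n t i. the (A t i j)) = \<omega>) \<and>
            (\<forall>t<c. \<forall>j<n. (\<Sum>i\<in>filled_col A m t j. the (A t i j)) = \<delta>))"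

definition on_diag :: "nat \<Rightarrow> nat \<Rightarrow> nat \<Rightarrow> nat \<Rightarrow> bool" where
  "on_diag n l i j \<longleftrightarrow> (int j - int i) mod int n = int l mod int n"

definition is_diagonal_MRS :: "nat \<Rightarrow> nat \<Rightarrow> nat \<Rightarrow> (nat \<Rightarrow> nat \<Rightarrow> nat \<Rightarrow> 'a::{ab_group_add,finite} option) \<Rightarrow> bool" where
  "is_diagonal_MRS n k c A \<longleftrightarrow>
     is_MRS n n k k c A \<and>
     (\<forall>t<c. \<exists>\<tau><n. \<forall>i<n. \<forall>j<n.
         A t i j \<noteq> None \<longleftrightarrow> (\<exists>l<k. on_diag n (\<tau> + l) i j))"

end

theory Submission
  imports Defs
begin


lemma invol_even:
  assumes "finite S" "\<forall>x\<in>S. f x \<in> S \<and> f x \<noteq> x \<and> f (f x) = x"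
  shows "even (card S)"
  using assms
proof (induction "card S" arbitrary: S rule: less_induct)
  case less
  show ?case
  proof (cases "S = {}")
    case True then show ?thesis by simp
  next
    case False
    then obtain x where x: "x \<in> S" by blast
    let ?T = "S - {x, f x}"
    have fx: "f x \<in> S" "f x \<noteq> x" using less.prems x by auto
    have cT: "card S = card ?T + 2"
    proof -
      have "card ?T = card S - card {x, f x}"
        using less.prems(1) x fx by (subst card_Diff_subset) auto
      moreover have "card {x, f x} = 2" using fx by simp
      moreover have "card S \<ge> 2" using fx x less.prems(1)
        by (metis \<open>card {x, f x} = 2\<close> card_mono empty_subsetI insert_subset)
      ultimately show ?thesis by simp
    qed
    have "\<forall>y\<in>?T. f y \<in> ?T \<and> f y \<noteq> y \<and> f (f y) = y"
      using less.prems(2) x by (metis DiffD1 DiffD2 DiffI insertCI insertE singletonD)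
    then have "even (card ?T)" using less.hyps[of ?T] cT less.prems(1) by auto
    then show ?thesis using cT by simp
  qed
qed

lemma exists_invol:
  fixes S :: "'a::ab_group_add set"
  assumes "finite S" "\<forall>x\<in>S. -x \<in> S" "0 \<in> S" "even (card S)"
  shows "\<exists>w\<in>S. w \<noteq> 0 \<and> w + w = 0"
proof (rule ccontr)
  assume H: "\<not> ?thesis"
  have "even (card (S - {0}))"
  proof (rule invol_even[where f=uminus])
    show "finite (S - {0})" using assms(1) by simp
    show "\<forall>x\<in>S - {0}. - x \<in> S - {0} \<and> - x \<noteq> x \<and> - (- x) = x"
    proof
      fix x assume x: "x \<in> S - {0}"
      have "-x \<noteq> x"
      proof
        assume "-x = x"
        then have "x + x = x + - x" by simp
        then have "x + x = 0" by simp
        then show False using H x by blast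
      qed
      then show "- x \<in> S - {0} \<and> - x \<noteq> x \<and> - (- x) = x" using x assms(2) by auto
    qed
  qed
  moreover have "card S = Suc (card (S - {0}))" using assms(1,3)
    by (rule card.remove)
  ultimately show False using assms(4) by simp
qed

lemma card_fibers:
  "card (range (\<lambda>x::'a::{ab_group_add,finite}. x + x)) * card {x::'a. x + x = 0} = card (UNIV::'a set)"
proof -
  let ?D = "range (\<lambda>x::'a. x + x)"
  let ?K = "{x::'a. x + x = 0}"
  let ?A = "\<lambda>d. {x::'a. x + x = d}"
  have U: "UNIV = \<Union>(?A ` ?D)" by auto
  have "card (\<Union>(?A ` ?D)) = (\<Sum>d\<in>?D. card (?A d))"
    by (rule card_UN_disjoint) auto
  also have "\<dots> = (\<Sum>d\<in>?D. card ?K)"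
  proof (rule sum.cong)
    fix d assume "d \<in> ?D"
    then obtain y where y: "d = y + y" by auto
    have "?A d = (\<lambda>k. y + k) ` ?K"
    proof
      show "?A d \<subseteq> (\<lambda>k. y + k) ` ?K"
      proof
        fix x assume "x \<in> ?A d"
        then have "(x - y) + (x - y) = 0" using y by (simp add: algebra_simps)
        then show "x \<in> (\<lambda>k. y + k) ` ?K" by (intro image_eqI[of _ _ "x - y"]) auto
      qed
      show "(\<lambda>k. y + k) ` ?K \<subseteq> ?A d"
      proof
        fix x assume "x \<in> (\<lambda>k. y + k) ` ?K"
        then obtain k where "k + k = 0" "x = y + k" by auto
        then show "x \<in> ?A d" using y
          by (simp add: algebra_simps)
      qed
    qed
    moreover have "inj_on (\<lambda>k. y + k) ?K" by (auto simp: inj_on_def)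
    ultimately show "card (?A d) = card ?K" by (simp add: card_image)
  qed simp
  finally show ?thesis using U by simp
qed

lemma exists_us:
  assumes "4 dvd card (UNIV::'a::{ab_group_add,finite} set)"
  shows "\<exists>(u::'a) s. u + u = 0 \<and> u \<noteq> 0 \<and> (\<forall>x. x + x \<noteq> s) \<and> (\<forall>x. x + x \<noteq> s + u)"
proof -
  let ?D = "range (\<lambda>x::'a. x + x)"
  let ?K = "{x::'a. x + x = 0}"
  have N: "card ?D * card ?K = card (UNIV::'a set)" by (rule card_fibers)
  have "\<exists>w\<in>(UNIV::'a set). w \<noteq> 0 \<and> w + w = 0"
    by (rule exists_invol) (use assms in auto)
  then obtain v :: 'a where v: "v \<noteq> 0" "v + v = 0" by auto
  have notsurj: "\<not> surj (\<lambda>x::'a. x + x)"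
  proof
    assume "surj (\<lambda>x::'a. x + x)"
    then have "inj (\<lambda>x::'a. x + x)" by (simp add: finite_UNIV_surj_inj)
    then show False using v by (metis add.right_neutral injD)
  qed
  show ?thesis
  proof (cases "\<exists>w\<in>?D. w \<noteq> 0 \<and> w + w = 0")
    case True
    then obtain w where w0: "w \<in> ?D" "w \<noteq> 0" "w + w = 0" by blast
    then obtain y where "w = y + y" by blast
    note w = w0(2,3) this
    from notsurj obtain s where "s \<notin> ?D" by blast
    then have s: "\<forall>x. x + x \<noteq> s" by auto
    have "\<forall>x. x + x \<noteq> s + w"
    proof (intro allI notI)
      fix x assume "x + x = s + w"
      then have "(x - y) + (x - y) = s" using w by (simp add: algebra_simps)
      then show False using s by blast
    qed
    then show ?thesis using w s by blast
  next
    case False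
    have "odd (card ?D)"
    proof
      assume "even (card ?D)"
      then have "\<exists>w\<in>?D. w \<noteq> 0 \<and> w + w = 0"
      proof (intro exists_invol)
        show "\<forall>x\<in>?D. - x \<in> ?D"
        proof
          fix x assume "x \<in> ?D"
          then obtain y where "x = y + y" by blast
          then have "- x = (-y) + (-y)" by simp
          then show "- x \<in> ?D" by blast
        qed
        show "(0::'a) \<in> ?D" by (rule image_eqI[of _ _ 0]) auto
      qed auto
      then show False using False by blast
    qed
    then have "4 dvd card ?K"
    proof -
      have "coprime (4::nat) (card ?D)" using \<open>odd (card ?D)\<close>
      proof -
        have "coprime ((2::nat)^2) (card ?D)" using \<open>odd (card ?D)\<close>
          by (simp only: coprime_power_left_iff coprime_left_2_iff_odd) simp
        then show ?thesis by simp
      qed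
      moreover have "4 dvd card ?D * card ?K" using assms N by simp
      ultimately show ?thesis using coprime_dvd_mult_right_iff by blast
    qed
    moreover have "card ?K > 0"
    proof -
      have "(0::'a) \<in> ?K" by simp
      then have "?K \<noteq> {}" by blast
      then show ?thesis by (simp only: card_gt_0_iff) simp
    qed
    ultimately have K4: "card ?K \<ge> 4" by (simp add: dvd_imp_le)
    have "card ?D * 4 \<le> card (UNIV::'a set)" using N K4 mult_le_mono2[OF K4, of "card ?D"] by simp
    let ?B = "?D \<union> (\<lambda>d. d - v) ` ?D"
    have "card ?B \<le> card ?D + card ?D"
      using card_Un_le[of ?D "(\<lambda>d. d - v) ` ?D"] card_image_le[of ?D "\<lambda>d. d - v"] by simp
    also have "\<dots> < card (UNIV::'a set)"
    proof -
      have "card ?D > 0" by (simp add: card_gt_0_iff)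
      then show ?thesis using \<open>card ?D * 4 \<le> card (UNIV::'a set)\<close> by linarith
    qed
    finally have "?B \<noteq> UNIV" by auto
    then obtain s where s: "s \<notin> ?B" by auto
    have "\<forall>x. x + x \<noteq> s" using s by auto
    moreover have "\<forall>x. x + x \<noteq> s + v"
    proof (intro allI notI)
      fix x assume "x + x = s + v"
      then have "s = (x + x) - v" by (simp add: algebra_simps)
      then show False using s by auto
    qed
    ultimately show ?thesis using v by blast
  qed
qed



lemma L1: "i < n \<Longrightarrow> l < n \<Longrightarrow> ((i + l) mod n + n - i) mod n = (l::nat)"
proof (cases "i + l < n")
  case True
  assume "i < n" "l < n"
  then show ?thesis using True by simp
next
  case False
  assume a: "i < n" "l < n"
  then have "(i + l) mod n = i + l - n" using False
    by (simp add: le_mod_geq)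
  then show ?thesis using a False by simp
qed

lemma L2: "i < n \<Longrightarrow> j < n \<Longrightarrow> (j + n - (j + n - i) mod n) mod n = (i::nat)"
proof (cases "i \<le> j")
  case True
  assume a: "i < n" "j < n"
  then have "(j + n - i) mod n = j - i" using True
    by (metis add.commute add_diff_assoc diff_less_Suc less_Suc_eq_le mod_add_self1 mod_less order.strict_trans1)
  then show ?thesis using a True by simp
next
  case False
  assume a: "i < n" "j < n"
  then have "(j + n - i) mod n = j + n - i" using False by simp
  then show ?thesis using a False by simp
qed

lemma L3: "i < n \<Longrightarrow> j < n \<Longrightarrow> (i + (j + n - i) mod n) mod n = (j::nat)"
proof (cases "i \<le> j")
  case True
  assume a: "i < n" "j < n"
  then have "(j + n - i) mod n = j - i" using True
    by (metis add.commute add_diff_assoc diff_less_Suc less_Suc_eq_le mod_add_self1 mod_less order.strict_trans1)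
  then show ?thesis using a True by simp
next
  case False
  assume a: "i < n" "j < n"
  then have "(j + n - i) mod n = j + n - i" using False by simp
  then show ?thesis using a False by simp
qed

lemma L4: "i < n \<Longrightarrow> j < n \<Longrightarrow> (int j - int i) mod int n = int ((j + n - i) mod n)"
proof -
  assume a: "i < n" "j < n"
  have "int ((j + n - i) mod n) = int (j + n - i) mod int n" by (simp add: zmod_int)
  also have "int (j + n - i) = (int j - int i) + int n" using a by simp
  finally show ?thesis by simp
qed

lemma L5: "0 < k \<Longrightarrow> ((k - 1) mod n + 1) mod n = (k::nat) mod n"
  by (metis Suc_diff_1 Suc_eq_plus1 mod_Suc_eq)

lemma sum_blocks:
  fixes f :: "nat \<Rightarrow> 'a::comm_monoid_add"
  shows "(\<Sum>l<4*b. f l) = (\<Sum>m<b. f (4*m) + f (4*m+1) + f (4*m+2) + f (4*m+3))"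
proof (induction b)
  case 0 then show ?case by simp
next
  case (Suc b)
  have e: "4 * Suc b = Suc (Suc (Suc (Suc (4*b))))" by simp
  have "(\<Sum>l<4 * Suc b. f l) = (\<Sum>l<4*b. f l) + f (4*b) + f (Suc (4*b)) + f (Suc (Suc (4*b))) + f (Suc (Suc (Suc (4*b))))"
    by (simp only: e sum.lessThan_Suc)
  also have "\<dots> = (\<Sum>l<4*b. f l) + (f (4*b) + f (4*b+1) + f (4*b+2) + f (4*b+3))"
    by (simp add: add.assoc numeral_eq_Suc)
  finally show ?case using Suc by simp
qed



definition phi :: "'a::ab_group_add \<Rightarrow> 'a \<Rightarrow> nat \<Rightarrow> 'a \<Rightarrow> 'a" where
  "phi s u q x = (if q = 0 then x else if q = 1 then s - x else if q = 2 then s + u - x else x + u)"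

definition orb :: "'a::ab_group_add \<Rightarrow> 'a \<Rightarrow> 'a \<Rightarrow> 'a set" where
  "orb s u x = {x, s - x, s + u - x, x + u}"

context
  fixes s u :: "'a::ab_group_add"
  assumes uu: "u + u = 0" and u0: "u \<noteq> 0"
    and s1: "\<forall>x. x + x \<noteq> s" and s2: "\<forall>x. x + x \<noteq> s + u"
begin

lemma mu: "- u = u" using uu by (metis add_eq_0_iff)

lemma orb_phi: "q < 4 \<Longrightarrow> phi s u q x \<in> orb s u x"
  by (auto simp: phi_def orb_def)

lemma m1: "z - u = z + u" using mu by (metis diff_conv_add_uminus)
lemma m2: "z + u + u = z" using uu by (simp add: add.assoc)

lemma orb_closed: "y \<in> orb s u x \<Longrightarrow> orb s u y = orb s u x"
proof -
  assume "y \<in> orb s u x"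
  then consider "y = x" | "y = s - x" | "y = s + u - x" | "y = x + u" unfolding orb_def by blast
  then show ?thesis
  proof cases
    case 1 then show ?thesis by simp
  next
    case 2
    have e: "s - y = x" "s + u - y = x + u" "y + u = s + u - x" using 2 by (simp_all add: algebra_simps)
    show ?thesis unfolding orb_def e unfolding 2 by blast
  next
    case 3
    have "s - y = x - u" using 3 by (simp add: algebra_simps)
    then have e1: "s - y = x + u" using m1[of x] by simp
    have e2: "s + u - y = x" using 3 by (simp add: algebra_simps)
    have "y + u = s - x + u + u" using 3 by (simp add: algebra_simps)
    then have e3: "y + u = s - x" using m2[of "s - x"] by simp
    show ?thesis unfolding orb_def e1 e2 e3 unfolding 3 by blast
  next
    case 4
    have "s - y = s - x - u" using 4 by (simp add: algebra_simps)
    then have "s - y = s - x + u" using m1[of "s - x"] by simp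
    then have e1: "s - y = s + u - x" by (simp add: algebra_simps)
    have e2: "s + u - y = s - x" using 4 by (simp add: algebra_simps)
    have e3: "y + u = x" using 4 m2 by simp
    show ?thesis unfolding orb_def e1 e2 e3 unfolding 4 by blast
  qed
qed

lemma phi_distinct: "q < 4 \<Longrightarrow> q' < 4 \<Longrightarrow> phi s u q x = phi s u q' x \<Longrightarrow> q = q'"
proof -
  assume q: "q < 4" "q' < 4" and e: "phi s u q x = phi s u q' x"
  have a: "x \<noteq> s - x"
  proof
    assume "x = s - x" then have "x + x = s" by (simp add: algebra_simps)
    then show False using s1 by blast
  qed
  have b: "x \<noteq> s + u - x"
  proof
    assume "x = s + u - x" then have "x + x = s + u" by (simp add: algebra_simps)
    then show False using s2 by blast
  qed
  have c: "x \<noteq> x + u" using u0 by simp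
  have d: "s - x \<noteq> s + u - x" using u0 by simp
  have f: "s - x \<noteq> x + u"
  proof
    assume "s - x = x + u"
    then have "s = x + x + u" by (simp add: algebra_simps)
    then have "s + u = x + x" using m2 by simp
    then show False using s2 by metis
  qed
  have g: "s + u - x \<noteq> x + u"
  proof
    assume "s + u - x = x + u"
    then have "s + u = x + x + u" by (simp add: algebra_simps)
    then have "s = x + x" by simp
    then show False using s1 by metis
  qed
  from q have "q = 0 \<or> q = 1 \<or> q = 2 \<or> q = 3" "q' = 0 \<or> q' = 1 \<or> q' = 2 \<or> q' = 3" by auto
  have p: "phi s u 0 x = x" "phi s u 1 x = s - x" "phi s u 2 x = s + u - x" "phi s u 3 x = x + u"
    by (simp_all add: phi_def)
  note ne = a b c d f g not_sym[OF a] not_sym[OF b] not_sym[OF c] not_sym[OF d]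
      not_sym[OF f] not_sym[OF g]
  have lst: "phi s u k x = [x, s - x, s + u - x, x + u] ! k" if "k < 4" for k
  proof -
    have "k = 0 \<or> k = 1 \<or> k = 2 \<or> k = 3" using that by auto
    then show ?thesis by (elim disjE) (simp_all add: phi_def)
  qed
  have dist: "distinct [x, s - x, s + u - x, x + u]" using ne by simp
  have len: "length [x, s - x, s + u - x, x + u] = 4" by simp
  have eq: "[x, s - x, s + u - x, x + u] ! q = [x, s - x, s + u - x, x + u] ! q'"
    using e by (simp only: lst[OF q(1)] lst[OF q(2)])
  have ql: "q < length [x, s - x, s + u - x, x + u]" "q' < length [x, s - x, s + u - x, x + u]"
    using q by (simp_all only: len)
  show ?thesis by (rule nth_eq_iff_index_eq[OF dist ql, THEN iffD1, OF eq])
qed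

definition rep :: "'a \<Rightarrow> 'a" where "rep x = (SOME y. y \<in> orb s u x)"

lemma rep_in: "rep x \<in> orb s u x"
  unfolding rep_def by (rule someI[of _ x]) (simp add: orb_def)

lemma rep_eq: "y \<in> orb s u x \<Longrightarrow> rep y = rep x"
  unfolding rep_def using orb_closed by simp

lemma rep_rep: "rep (rep x) = rep x"
  using rep_eq[OF rep_in] .

lemma cover: "\<exists>q<4. g = phi s u q (rep g)"
proof -
  have "orb s u (rep g) = orb s u g" by (rule orb_closed[OF rep_in])
  then have "g \<in> orb s u (rep g)" by (simp add: orb_def)
  then have "g \<in> set [rep g, s - rep g, s + u - rep g, rep g + u]" by (simp add: orb_def)
  then obtain k where k0: "k < length [rep g, s - rep g, s + u - rep g, rep g + u]"
      "[rep g, s - rep g, s + u - rep g, rep g + u] ! k = g"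
    unfolding in_set_conv_nth by blast
  have k: "k < 4" "g = [rep g, s - rep g, s + u - rep g, rep g + u] ! k"
    using k0(1) apply simp
    using k0(2) by (rule sym)
  have "k = 0 \<or> k = 1 \<or> k = 2 \<or> k = 3" using k(1) by auto
  then have "phi s u k (rep g) = [rep g, s - rep g, s + u - rep g, rep g + u] ! k"
    by (elim disjE) (simp_all add: phi_def)
  then show ?thesis using k by metis
qed

lemma key_inj:
  assumes "x \<in> range rep" "x' \<in> range rep" "q < 4" "q' < 4" "phi s u q x = phi s u q' x'"
  shows "x = x' \<and> q = q'"
proof -
  obtain a a' where x: "x = rep a" and x': "x' = rep a'" using assms by auto
  have "orb s u x = orb s u (phi s u q x)" using orb_closed[OF orb_phi[OF assms(3)]] by simp
  also have "\<dots> = orb s u x'" using orb_closed[OF orb_phi[OF assms(4)]] assms(5) by simp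
  finally have "rep x = rep x'" unfolding rep_def by simp
  then have xx: "x = x'" using x x' rep_rep by simp
  then show ?thesis using phi_distinct[OF assms(3,4)] assms(5) by simp
qed

end


lemma idx_bound:
  fixes t m r b c n :: nat
  assumes "t < c" "m < b" "r < n"
  shows "(t*b + m)*n + r < n*b*c"
proof -
  have "t*b + m + 1 \<le> (t+1)*b" using assms(2) by simp
  also have "\<dots> \<le> c*b" using assms(1) by (intro mult_le_mono1) simp
  finally have h: "(t*b + m + 1)*n \<le> c*b*n" by (rule mult_le_mono1)
  have "(t*b + m)*n + r < (t*b+m)*n + n" using assms(3) by simp
  also have "\<dots> = (t*b + m + 1)*n" by simp
  finally show ?thesis using h by (simp add: ac_simps)
qed

lemma decode:
  fixes t m r b n :: nat
  assumes "m < b" "r < n"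
  shows "((t*b + m)*n + r) mod n = r" "((t*b + m)*n + r) div n div b = t"
    "((t*b + m)*n + r) div n mod b = m"
  using assms by simp_all

lemma blk1: "(u::'a::ab_group_add) + u = 0 \<Longrightarrow> X + (s - Y) + (s + u - X) + (Y + u) = s + s"
proof -
  assume uu: "u + u = 0"
  have "X + (s - Y) + (s + u - X) + (Y + u) = s + s + (u + u)" by (simp add: algebra_simps)
  then show ?thesis using uu by simp
qed

lemma blk2: "(u::'a::ab_group_add) + u = 0 \<Longrightarrow> X + (s - X) + (s + u - Y) + (Y + u) = s + s"
proof -
  assume uu: "u + u = 0"
  have "X + (s - X) + (s + u - Y) + (Y + u) = s + s + (u + u)" by (simp add: algebra_simps)
  then show ?thesis using uu by simp
qed



lemma ar:
  fixes m :: nat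
  shows "(4*m) mod 4 = 0" "(4*m) div 4 = m" "(4*m) mod 2 = 0"
    "(4*m+1) mod 4 = 1" "(4*m+1) div 4 = m" "(4*m+1) mod 2 = 1"
    "(4*m+2) mod 4 = 2" "(4*m+2) div 4 = m" "(4*m+2) mod 2 = 0"
    "(4*m+3) mod 4 = 3" "(4*m+3) div 4 = m" "(4*m+3) mod 2 = 1"
  by presburger+

lemma construction:
  fixes s u :: "'a::{ab_group_add,finite}" and b n c :: nat
  assumes uu: "u + u = 0" and u0: "u \<noteq> 0" and s1: "\<forall>x. x + x \<noteq> s" and s2: "\<forall>x. x + x \<noteq> s + u"
    and N: "card (UNIV::'a set) = 4*n*b*c" and b: "0 < b" and n: "0 < n" and c: "0 < c" and bn: "4*b \<le> n"
  shows "\<exists>A::nat\<Rightarrow>nat\<Rightarrow>nat\<Rightarrow>'a option. is_diagonal_MRS n (4*b) c A"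
proof -
  let ?R = "range (rep s u)"
  note facts = uu u0 s1 s2
  have kinj: "x = x' \<and> q = q'" if "x \<in> ?R" "x' \<in> ?R" "q < 4" "q' < 4" "phi s u q x = phi s u q' x'"
    for x x' q q' using key_inj[OF facts that] .
  have cov: "\<exists>q<4. g = phi s u q (rep s u g)" for g using cover[OF facts] .
  let ?h = "\<lambda>(q,x). phi s u q x"
  have himg: "?h ` ({..<4} \<times> ?R) = UNIV"
  proof -
    have "g \<in> ?h ` ({..<4} \<times> ?R)" for g
    proof -
      obtain q where q: "q < 4" "g = phi s u q (rep s u g)" using cov by blast
      show ?thesis
      proof (rule image_eqI[of _ _ "(q, rep s u g)"])
        show "g = ?h (q, rep s u g)" using q(2) by (simp only: case_prod_conv)
        show "(q, rep s u g) \<in> {..<4} \<times> ?R" using q(1) by simp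
      qed

    qed
    then show ?thesis by blast
  qed
  have hinj: "inj_on ?h ({..<4} \<times> ?R)"
  proof (rule inj_onI)
    fix x y assume x: "x \<in> {..<4} \<times> ?R" and y: "y \<in> {..<4} \<times> ?R" and e: "?h x = ?h y"
    obtain q a where xe: "x = (q, a)" by (cases x)
    obtain q' a' where ye: "y = (q', a')" by (cases y)
    have "a = a' \<and> q = q'" using kinj[of a a' q q'] x y e xe ye by simp
    then show "x = y" using xe ye by simp
  qed
  have "card ({..<4::nat} \<times> ?R) = card (UNIV::'a set)"
    using card_image[OF hinj] himg by simp
  then have cR: "card ?R = n*b*c" using N by (simp add: card_cartesian_product)
  obtain e where e: "bij_betw e {0..<n*b*c} ?R"
    using ex_bij_betw_nat_finite[of ?R] cR by auto
  have eR: "e p \<in> ?R" if "p < n*b*c" for p using bij_betwE[OF e] that by simp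
  have einj: "p = p'" if "p < n*b*c" "p' < n*b*c" "e p = e p'" for p p'
    using inj_onD[OF bij_betw_imp_inj_on[OF e] that(3)] that(1,2) by simp
  define idx where "idx t i l = (t*b + l div 4)*n + (i + l mod 2) mod n" for t i l :: nat
  define F where "F t i l = phi s u (l mod 4) (e (idx t i l))" for t i l
  define A where "A t i j = (if (j + n - i) mod n < 4*b then Some (F t i ((j + n - i) mod n)) else None)"
    for t i j
  have n4: "4 \<le> n" using b bn by simp
  have idxb: "idx t i l < n*b*c" if "t < c" "l < 4*b" for t i l
    unfolding idx_def by (rule idx_bound) (use that n in auto)
  let ?P = "{..<c} \<times> {..<n} \<times> {..<4*b}"
  let ?G = "\<lambda>(t,i,l). F t i l"
  have Finj: "inj_on ?G ?P"
  proof (rule inj_onI)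
    fix x y assume x: "x \<in> ?P" and y: "y \<in> ?P" and xy: "?G x = ?G y"
    obtain t i l where xe: "x = (t,i,l)" by (cases x) auto
    obtain t' i' l' where ye: "y = (t',i',l')" by (cases y) auto
    have r: "t < c" "i < n" "l < 4*b" "t' < c" "i' < n" "l' < 4*b" using x y xe ye by auto
    have "F t i l = F t' i' l'" using xy xe ye by simp
    then have "phi s u (l mod 4) (e (idx t i l)) = phi s u (l' mod 4) (e (idx t' i' l'))"
      unfolding F_def .
    moreover have eR1: "e (idx t i l) \<in> ?R" "e (idx t' i' l') \<in> ?R"
      using eR idxb r by simp_all
    moreover have "l mod 4 < 4" "l' mod 4 < 4" by simp_all
    ultimately have "e (idx t i l) = e (idx t' i' l') \<and> l mod 4 = l' mod 4"
      using kinj by blast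
    then have p: "idx t i l = idx t' i' l'" and q: "l mod 4 = l' mod 4"
      using einj[OF idxb idxb] r by auto
    have lb: "l div 4 < b" "l' div 4 < b" using r by auto
    have "idx t i l div n div b = t" "idx t i l div n mod b = l div 4"
      "idx t i l mod n = (i + l mod 2) mod n"
      unfolding idx_def using decode[OF lb(1), of "(i + l mod 2) mod n" n t] n by simp_all
    moreover have "idx t' i' l' div n div b = t'" "idx t' i' l' div n mod b = l' div 4"
      "idx t' i' l' mod n = (i' + l' mod 2) mod n"
      unfolding idx_def using decode[OF lb(2), of "(i' + l' mod 2) mod n" n t'] n by simp_all
    ultimately have tt: "t = t'" and md: "l div 4 = l' div 4"
      and im0: "(i + l mod 2) mod n = (i' + l' mod 2) mod n" using p by auto
    have ll: "l = l'" using md q by (metis div_mult_mod_eq)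
    have im: "(i + l mod 2) mod n = (i' + l mod 2) mod n" using im0 ll by simp
    have "l mod 2 < 2" by simp
    then have d: "l mod 2 < n" using n4 by linarith
    have "i = ((l mod 2 + i) mod n + n - l mod 2) mod n" using L1[OF d r(2)] by simp
    also have "\<dots> = ((l mod 2 + i') mod n + n - l mod 2) mod n" using im by (simp add: add.commute)
    also have "\<dots> = i'" using L1[OF d r(5)] by simp
    finally show "x = y" using xe ye tt ll by simp
  qed
  have cP: "card ?P = card (UNIV::'a set)" using N by (simp add: card_cartesian_product)
  have Fsurj: "?G ` ?P = UNIV"
  proof (rule card_subset_eq)
    show "card (?G ` ?P) = card (UNIV::'a set)" using card_image[OF Finj] cP by simp
  qed auto
  have Aeq: "A t i ((i + l) mod n) = Some (F t i l)" if "i < n" "l < 4*b" for t i l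
  proof -
    have "l < n" using that bn by simp
    then have "((i + l) mod n + n - i) mod n = l" using L1[OF that(1)] by simp
    then show ?thesis unfolding A_def using that by simp
  qed
  have uniq: "\<forall>g. \<exists>!(t, i, j). t < c \<and> i < n \<and> j < n \<and> A t i j = Some g"
  proof
    fix g
    have "g \<in> ?G ` ?P" using Fsurj by simp
    then obtain t i l where tl: "t < c" "i < n" "l < 4*b" "g = F t i l" by auto
    show "\<exists>!(t, i, j). t < c \<and> i < n \<and> j < n \<and> A t i j = Some g"
    proof (rule ex1I[of _ "(t, i, (i + l) mod n)"])
      show "case (t, i, (i + l) mod n) of (t, i, j) \<Rightarrow> t < c \<and> i < n \<and> j < n \<and> A t i j = Some g"
        using tl Aeq[OF tl(2) tl(3)] n by simp
      fix y assume y: "case y of (t, i, j) \<Rightarrow> t < c \<and> i < n \<and> j < n \<and> A t i j = Some g"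
      obtain t' i' j' where ye: "y = (t', i', j')" by (cases y)
      have y': "t' < c" "i' < n" "j' < n" "A t' i' j' = Some g" using y ye by auto
      define l' where "l' = (j' + n - i') mod n"
      have l'b: "l' < 4*b" and gF: "F t' i' l' = g" using y'(4) unfolding A_def l'_def
        by (auto split: if_splits)
      have "(t', i', l') = (t, i, l)"
        using inj_onD[OF Finj, of "(t',i',l')" "(t,i,l)"] gF tl y' l'b by simp
      then have "t' = t" "i' = i" "l' = l" by auto
      moreover have "j' = (i' + l') mod n" using L3[OF y'(2) y'(3)] l'_def by simp
      ultimately show "y = (t, i, (i + l) mod n)" using ye by simp
    qed
  qed
  have frow: "filled_row A n t i = (\<lambda>l. (i + l) mod n) ` {..<4*b}" if "i < n" for t i
  proof
    show "filled_row A n t i \<subseteq> (\<lambda>l. (i + l) mod n) ` {..<4*b}"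
    proof
      fix j assume "j \<in> filled_row A n t i"
      then have j: "j < n" "(j + n - i) mod n < 4*b" unfolding filled_row_def A_def
        by (auto split: if_splits)
      show "j \<in> (\<lambda>l. (i + l) mod n) ` {..<4*b}"
      proof (rule image_eqI[of _ _ "(j + n - i) mod n"])
        show "j = (i + (j + n - i) mod n) mod n" by (simp only: L3[OF that j(1)])
        show "(j + n - i) mod n \<in> {..<4*b}" using j(2) by simp
      qed
    qed
    show "(\<lambda>l. (i + l) mod n) ` {..<4*b} \<subseteq> filled_row A n t i"
    proof
      fix j assume "j \<in> (\<lambda>l. (i + l) mod n) ` {..<4*b}"
      then obtain l where l: "l < 4*b" "j = (i + l) mod n" by auto
      then show "j \<in> filled_row A n t i" unfolding filled_row_def using Aeq[OF that l(1)] n by simp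
    qed
  qed
  have rinj: "inj_on (\<lambda>l. (i + l) mod n) {..<4*b}" if "i < n" for i
  proof (rule inj_onI)
    fix l l' assume l: "l \<in> {..<4*b}" "l' \<in> {..<4*b}" and e: "(i + l) mod n = (i + l') mod n"
    have ln: "l < n" "l' < n" using l bn by auto
    have "l = ((i + l) mod n + n - i) mod n" by (rule sym[OF L1[OF that ln(1)]])
    also have "\<dots> = ((i + l') mod n + n - i) mod n" by (simp only: e)
    also have "\<dots> = l'" by (rule L1[OF that ln(2)])
    finally show "l = l'" .
  qed
  have fcol: "filled_col A n t j = (\<lambda>l. (j + n - l) mod n) ` {..<4*b}" if "j < n" for t j
  proof
    show "filled_col A n t j \<subseteq> (\<lambda>l. (j + n - l) mod n) ` {..<4*b}"
    proof
      fix i assume "i \<in> filled_col A n t j"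
      then have i: "i < n" "(j + n - i) mod n < 4*b" unfolding filled_col_def A_def
        by (auto split: if_splits)
      show "i \<in> (\<lambda>l. (j + n - l) mod n) ` {..<4*b}"
      proof (rule image_eqI[of _ _ "(j + n - i) mod n"])
        show "i = (j + n - (j + n - i) mod n) mod n" by (simp only: L2[OF i(1) that])
        show "(j + n - i) mod n \<in> {..<4*b}" using i(2) by simp
      qed
    qed
    show "(\<lambda>l. (j + n - l) mod n) ` {..<4*b} \<subseteq> filled_col A n t j"
    proof
      fix i assume "i \<in> (\<lambda>l. (j + n - l) mod n) ` {..<4*b}"
      then obtain l where l: "l < 4*b" "i = (j + n - l) mod n" by auto
      have "l < n" using l bn by simp
      then have "(j + n - i) mod n = l" using L2[OF _ that, of l] l by simp
      then show "i \<in> filled_col A n t j" unfolding filled_col_def A_def using l n by simp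
    qed
  qed
  have cinj: "inj_on (\<lambda>l. (j + n - l) mod n) {..<4*b}" if "j < n" for j
  proof (rule inj_onI)
    fix l l' assume l: "l \<in> {..<4*b}" "l' \<in> {..<4*b}" and e: "(j + n - l) mod n = (j + n - l') mod n"
    have ln: "l < n" "l' < n" using l bn by auto
    have "l = (j + n - (j + n - l) mod n) mod n" by (rule sym[OF L2[OF ln(1) that]])
    also have "\<dots> = (j + n - (j + n - l') mod n) mod n" by (simp only: e)
    also have "\<dots> = l'" by (rule L2[OF ln(2) that])
    finally show "l = l'" .
  qed
  define \<omega> where "\<omega> = (\<Sum>m<b. s + s)"
  have rowsum: "(\<Sum>l<4*b. F t i l) = \<omega>" for t i
  proof -
    have "(\<Sum>l<4*b. F t i l) = (\<Sum>m<b. F t i (4*m) + F t i (4*m+1) + F t i (4*m+2) + F t i (4*m+3))"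
      by (rule sum_blocks)
    also have "\<dots> = \<omega>" unfolding \<omega>_def
    proof (rule sum.cong)
      fix m
      define X where "X = e ((t*b+m)*n + i mod n)"
      define Y where "Y = e ((t*b+m)*n + (i + 1) mod n)"
      have "F t i (4*m) = X" "F t i (4*m+1) = s - Y" "F t i (4*m+2) = s + u - X" "F t i (4*m+3) = Y + u"
        unfolding F_def idx_def ar phi_def X_def Y_def by simp_all
      then show "F t i (4*m) + F t i (4*m+1) + F t i (4*m+2) + F t i (4*m+3) = s + s"
        using blk1[OF uu] by simp
    qed simp
    finally show ?thesis .
  qed
  have colsum: "(\<Sum>l<4*b. F t ((j + n - l) mod n) l) = \<omega>" if "j < n" for t j
  proof -
    let ?f = "\<lambda>l. F t ((j + n - l) mod n) l"
    have "(\<Sum>l<4*b. ?f l) = (\<Sum>m<b. ?f (4*m) + ?f (4*m+1) + ?f (4*m+2) + ?f (4*m+3))"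
      by (rule sum_blocks)
    also have "\<dots> = \<omega>" unfolding \<omega>_def
    proof (rule sum.cong)
      fix m assume "m \<in> {..<b}"
      then have m: "4*m + 3 < n" using bn by simp
      define X where "X = e ((t*b+m)*n + (j + n - 4*m) mod n)"
      define Y where "Y = e ((t*b+m)*n + (j + n - (4*m+2)) mod n)"
      have k1: "((j + n - (4*m+1)) mod n + 1) mod n = (j + n - 4*m) mod n"
      proof -
        have eq: "j + n - 4*m - 1 = j + n - (4*m+1)" by simp
        have "((j + n - 4*m - 1) mod n + 1) mod n = (j + n - 4*m) mod n" by (rule L5) (use m in simp)
        then show ?thesis by (simp only: eq)
      qed
      have k3: "((j + n - (4*m+3)) mod n + 1) mod n = (j + n - (4*m+2)) mod n"
      proof -
        have eq: "j + n - (4*m+2) - 1 = j + n - (4*m+3)" by simp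
        have "((j + n - (4*m+2) - 1) mod n + 1) mod n = (j + n - (4*m+2)) mod n" by (rule L5) (use m in simp)
        then show ?thesis by (simp only: eq)
      qed
      have "?f (4*m) = X" "?f (4*m+1) = s - X" "?f (4*m+2) = s + u - Y" "?f (4*m+3) = Y + u"
        unfolding F_def idx_def ar phi_def X_def Y_def using k1 k3 by simp_all
      then show "?f (4*m) + ?f (4*m+1) + ?f (4*m+2) + ?f (4*m+3) = s + s"
        using blk2[OF uu] by simp
    qed simp
    finally show ?thesis .
  qed
  have rows: "(\<Sum>j\<in>filled_row A n t i. the (A t i j)) = \<omega>" if "i < n" for t i
  proof -
    have "(\<Sum>j\<in>filled_row A n t i. the (A t i j)) = (\<Sum>l<4*b. the (A t i ((i + l) mod n)))"
      unfolding frow[OF that] by (simp add: sum.reindex[OF rinj[OF that]])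
    also have "\<dots> = (\<Sum>l<4*b. F t i l)" by (rule sum.cong) (simp_all add: Aeq[OF that])
    finally show ?thesis using rowsum by simp
  qed
  have cols: "(\<Sum>i\<in>filled_col A n t j. the (A t i j)) = \<omega>" if "j < n" for t j
  proof -
    have "(\<Sum>i\<in>filled_col A n t j. the (A t i j)) = (\<Sum>l<4*b. the (A t ((j + n - l) mod n) j))"
      unfolding fcol[OF that] by (simp add: sum.reindex[OF cinj[OF that]])
    also have "\<dots> = (\<Sum>l<4*b. F t ((j + n - l) mod n) l)"
    proof (rule sum.cong)
      fix l assume "l \<in> {..<4*b}"
      then have l: "l < 4*b" "l < n" using bn by auto
      have "(j + n - (j + n - l) mod n) mod n = l" using L2[OF l(2) that] .
      then show "the (A t ((j + n - l) mod n) j) = F t ((j + n - l) mod n) l"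
        unfolding A_def using l by simp
    qed simp
    finally show ?thesis using colsum[OF that] by simp
  qed
  have diag: "A t i j \<noteq> None \<longleftrightarrow> (\<exists>l<4*b. on_diag n (0 + l) i j)" if "i < n" "j < n" for t i j
  proof
    assume "A t i j \<noteq> None"
    then have h: "(j + n - i) mod n < 4*b" unfolding A_def by (simp split: if_splits)
    have "(j + n - i) mod n < n" using n by simp
    then have "on_diag n (0 + (j + n - i) mod n) i j"
      unfolding on_diag_def using L4[OF that] by (simp add: zmod_int)
    then show "\<exists>l<4*b. on_diag n (0 + l) i j" using h by blast
  next
    assume "\<exists>l<4*b. on_diag n (0 + l) i j"
    then obtain l where l: "l < 4*b" "on_diag n l i j" by auto
    have ln: "l < n" using l bn by simp
    have "int ((j + n - i) mod n) = int l mod int n" using l(2) L4[OF that] unfolding on_diag_def by simp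
    also have "\<dots> = int l" using ln by simp
    finally have "(j + n - i) mod n = l" by simp
    then show "A t i j \<noteq> None" unfolding A_def using l by simp
  qed
  have fr: "card (filled_row A n t i) = 4*b" if "i < n" for t i
    unfolding frow[OF that] using card_image[OF rinj[OF that]] by simp
  have fc: "card (filled_col A n t j) = 4*b" if "j < n" for t j
    unfolding fcol[OF that] using card_image[OF cinj[OF that]] by simp
  have "is_diagonal_MRS n (4*b) c A"
    unfolding is_diagonal_MRS_def is_MRS_def
  proof (intro conjI)
    show "card (UNIV::'a set) = n * (4*b) * c" using N by simp
    show "\<exists>\<omega> \<delta>. (\<forall>t<c. \<forall>i<n. (\<Sum>j\<in>filled_row A n t i. the (A t i j)) = \<omega>) \<and>
            (\<forall>t<c. \<forall>j<n. (\<Sum>i\<in>filled_col A n t j. the (A t i j)) = \<delta>)"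
      using rows cols by blast
    show "\<forall>t<c. \<exists>\<tau><n. \<forall>i<n. \<forall>j<n. A t i j \<noteq> None \<longleftrightarrow> (\<exists>l<4*b. on_diag n (\<tau> + l) i j)"
      using diag n by blast
  qed (use n b c uniq fr fc in auto)
  then show ?thesis by blast
qed
theorem proposition5p8:
  fixes b n c :: nat
  assumes "0 < b" and "0 < n" and "0 < c"
    and "4 \<le> 4 * b" and "4 * b \<le> n"
    and "card (UNIV :: 'a::{ab_group_add,finite} set) = 4 * n * b * c"
  shows "\<exists>A :: nat \<Rightarrow> nat \<Rightarrow> nat \<Rightarrow> 'a option. is_diagonal_MRS n (4 * b) c A"
proof -
  have "4 dvd card (UNIV::'a set)" using assms(6) by simp
  then obtain u s :: 'a where us: "u + u = 0" "u \<noteq> 0" "\<forall>x. x + x \<noteq> s" "\<forall>x. x + x \<noteq> s + u"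
    using exists_us by blast
  show ?thesis
    by (rule construction[where s = s and u = u]) (use assms us in simp_all)
qed

end
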